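(* For every $\delta>0$ there exist an instance of a sequential first-price auction with two additive buyers, a selling order and a tie-breaking rule, and a pure subgame perfect equilibrium whose revenue is at most $\delta$ times the Walrasian revenue $\sum_{j\in M}\big(\text{second-highest value } v_{i,j}\text{ among the buyers}\big)$. That is, there are subgame perfect equilibria for additive buyers whose ratio of revenue to the Walrasian revenue is vanishing.
   Context: Setting: a set $M$ of $m$ items and a set of buyers; buyer $i$ is additive, i.e. there are $v_{i,j}\ge 0$ with $v_i(S)=\sum_{j\in S}v_{i,j}$, and utilities are quasi-linear. Items are sold one at a time, each by a sealed-bid first-price auction without reserve price (a highest bidder wins, ties broken by a seller-chosen rule, the winner pays his bid); the seller fixes the selling order and tie-breaking rule. Full information. A pure subgame perfect equilibrium is a profile of pure strategies that is a Nash equilibrium in every subgame; its revenue is the total payment on the equilibrium path. For additive buyers the minimum Walrasian revenue equals the sum over items of the second-highest value for that item, which is the Walrasian revenue used here. *)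

theory Defs
  imports Complex_Main
begin

text \<open>Buyers are 0..<n, items are 0..<m and are sold in the order 0,1,...,m-1
  (the selling order is encoded by the labelling of the items).
  A history is the list of bid profiles submitted in the auctions held so far.\<close>

type_synonym bidvec = "nat \<Rightarrow> real"
type_synonym history = "bidvec list"
type_synonym strategy = "history \<Rightarrow> real"

definition valid_tiebreak :: "nat \<Rightarrow> (nat \<Rightarrow> bidvec \<Rightarrow> nat) \<Rightarrow> bool" where
  "valid_tiebreak n tb \<longleftrightarrow>
     (\<forall>j b. tb j b < n \<and> (\<forall>i<n. b i \<le> b (tb j b)))"

definition valid_strategy :: "strategy \<Rightarrow> bool" where
  "valid_strategy s \<longleftrightarrow> (\<forall>h. 0 \<le> s h)"

definition valid_history :: "nat \<Rightarrow> history \<Rightarrow> bool" where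
  "valid_history n h \<longleftrightarrow>
     (\<forall>b\<in>set h. \<forall>i. (i < n \<longrightarrow> 0 \<le> b i) \<and> (n \<le> i \<longrightarrow> b i = 0))"

fun play :: "nat \<Rightarrow> (nat \<Rightarrow> strategy) \<Rightarrow> nat \<Rightarrow> history \<Rightarrow> history" where
  "play n s 0 h = h"
| "play n s (Suc k) h = play n s k (h @ [(\<lambda>i. if i < n then s i h else 0)])"

definition winner :: "(nat \<Rightarrow> bidvec \<Rightarrow> nat) \<Rightarrow> history \<Rightarrow> nat \<Rightarrow> nat" where
  "winner tb H j = tb j (H ! j)"

text \<open>Quasi-linear utility of buyer i (additive values v) accrued from the
  auctions length h, ..., m-1 when play starts at history h.
  (Payoffs from earlier auctions are fixed by h and do not affect incentives.)\<close>
definition cont_utility ::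
  "nat \<Rightarrow> nat \<Rightarrow> (nat \<Rightarrow> nat \<Rightarrow> real) \<Rightarrow> (nat \<Rightarrow> bidvec \<Rightarrow> nat)
    \<Rightarrow> (nat \<Rightarrow> strategy) \<Rightarrow> nat \<Rightarrow> history \<Rightarrow> real" where
  "cont_utility n m v tb s i h =
     (let H = play n s (m - length h) h in
      \<Sum>j\<in>{length h..<m}. if winner tb H j = i then v i j - (H ! j) i else 0)"

definition pure_SPE ::
  "nat \<Rightarrow> nat \<Rightarrow> (nat \<Rightarrow> nat \<Rightarrow> real) \<Rightarrow> (nat \<Rightarrow> bidvec \<Rightarrow> nat)
    \<Rightarrow> (nat \<Rightarrow> strategy) \<Rightarrow> bool" where
  "pure_SPE n m v tb s \<longleftrightarrow>
     (\<forall>i<n. valid_strategy (s i)) \<and>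
     (\<forall>h. valid_history n h \<and> length h < m \<longrightarrow>
        (\<forall>i<n. \<forall>s'. valid_strategy s' \<longrightarrow>
            cont_utility n m v tb (s(i := s')) i h \<le> cont_utility n m v tb s i h))"

definition revenue ::
  "nat \<Rightarrow> nat \<Rightarrow> (nat \<Rightarrow> bidvec \<Rightarrow> nat) \<Rightarrow> (nat \<Rightarrow> strategy) \<Rightarrow> real" where
  "revenue n m tb s =
     (let H = play n s m [] in \<Sum>j<m. (H ! j) (winner tb H j))"

text \<open>Second-highest value for item j among buyers 0..<n (n \<ge> 2).\<close>
definition second_highest :: "nat \<Rightarrow> (nat \<Rightarrow> nat \<Rightarrow> real) \<Rightarrow> nat \<Rightarrow> real" where
  "second_highest n v j =
     Max {min (v i j) (v k j) | i k. i < n \<and> k < n \<and> i \<noteq> k}"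

definition walrasian_revenue :: "nat \<Rightarrow> nat \<Rightarrow> (nat \<Rightarrow> nat \<Rightarrow> real) \<Rightarrow> real" where
  "walrasian_revenue n m v = (\<Sum>j<m. second_highest n v j)"

end

theory Submission
  imports Defs
begin

definition tb0 :: "nat \<Rightarrow> bidvec \<Rightarrow> nat" where
  "tb0 j b = (if j = 0 then (if b 1 > b 0 then 1 else 0) else (if b 0 > b 1 then 0 else 1))"

definition v0 :: "nat \<Rightarrow> nat \<Rightarrow> real" where
  "v0 i j = (if j = 0 \<and> i < 2 then 1 else if j = 1 \<and> i = 1 then 2 else 0)"

definition s0 :: "nat \<Rightarrow> strategy" where
  "s0 i h = (if length h = 1 \<and> (h!0) 1 > (h!0) 0 then 2 else 0)"

lemma cu0: "cont_utility 2 2 v tb S i [] =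
  (let B0 = (\<lambda>k. if k < 2 then S k [] else 0); B1 = (\<lambda>k. if k < 2 then S k [B0] else 0) in
    (if tb 0 B0 = i then v i 0 - B0 i else 0) + (if tb 1 B1 = i then v i 1 - B1 i else 0))"
proof -
  have e: "{0..<2::nat} = {0,1}" by auto
  show ?thesis by (simp add: cont_utility_def e numeral_2_eq_2 winner_def Let_def)
qed

lemma cu1: "length h = 1 \<Longrightarrow> cont_utility 2 2 v tb S i h =
  (let B1 = (\<lambda>k. if k < 2 then S k h else 0) in
    (if tb 1 B1 = i then v i 1 - B1 i else 0))"
proof -
  assume l: "length h = 1"
  have e: "{1..<2::nat} = {1}" by auto
  show ?thesis using l by (simp add: cont_utility_def e numeral_2_eq_2 winner_def Let_def nth_append)
qed

lemma spe: "pure_SPE 2 2 v0 tb0 s0"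
  unfolding pure_SPE_def
proof (intro conjI allI impI)
  fix i assume "i < (2::nat)" thus "valid_strategy (s0 i)"
    by (simp add: valid_strategy_def s0_def)
next
  fix h :: history and i :: nat and s' :: strategy
  assume h: "valid_history 2 h \<and> length h < 2" and i: "i < 2" and s': "valid_strategy s'"
  have nn: "\<And>x. 0 \<le> s' x" using s' by (simp add: valid_strategy_def)
  from h have "h = [] \<or> length h = 1" by (cases h) auto
  thus "cont_utility 2 2 v0 tb0 (s0(i := s')) i h \<le> cont_utility 2 2 v0 tb0 s0 i h"
  proof
    assume "h = []"
    moreover have "cont_utility 2 2 v0 tb0 (s0(i := s')) i [] \<le> cont_utility 2 2 v0 tb0 s0 i []"
      using i nn
      unfolding cu0 Let_def
      by (auto simp: tb0_def v0_def s0_def less_2_cases_iff split: if_splits)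
    ultimately show ?thesis by simp
  next
    assume l: "length h = 1"
    show ?thesis using i nn
      unfolding cu1[OF l] Let_def
      by (auto simp: tb0_def v0_def s0_def less_2_cases_iff l split: if_splits)
  qed
qed


lemma tb_ok: "valid_tiebreak 2 tb0"
  unfolding valid_tiebreak_def tb0_def
  by (auto simp: less_2_cases_iff)

lemma sh0: "second_highest 2 v0 0 = 1"
proof -
  have "{min (v0 i 0) (v0 k 0) | i k. i < 2 \<and> k < 2 \<and> i \<noteq> k} = {1}"
  proof -
    have c: "\<And>i k. (i < (2::nat) \<and> k < 2 \<and> i \<noteq> k) = ((i = 0 \<and> k = 1) \<or> (i = 1 \<and> k = 0))" by auto
    have "{min (v0 i 0) (v0 k 0) | i k. i < 2 \<and> k < 2 \<and> i \<noteq> k} = {min (v0 i 0) (v0 k 0) | i k. (i = 0 \<and> k = 1) \<or> (i = 1 \<and> k = 0)}"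
      unfolding c ..
    also have "\<dots> = {min (v0 0 0) (v0 1 0), min (v0 1 0) (v0 0 0)}" by blast
    finally show ?thesis by (simp add: v0_def)
  qed
  thus ?thesis by (simp add: second_highest_def)
qed

lemma sh1: "second_highest 2 v0 1 = 0"
proof -
  have "{min (v0 i 1) (v0 k 1) | i k. i < 2 \<and> k < 2 \<and> i \<noteq> k} = {0}"
  proof -
    have c: "\<And>i k. (i < (2::nat) \<and> k < 2 \<and> i \<noteq> k) = ((i = 0 \<and> k = 1) \<or> (i = 1 \<and> k = 0))" by auto
    have "{min (v0 i 1) (v0 k 1) | i k. i < 2 \<and> k < 2 \<and> i \<noteq> k} = {min (v0 i 1) (v0 k 1) | i k. (i = 0 \<and> k = 1) \<or> (i = 1 \<and> k = 0)}"
      unfolding c ..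
    also have "\<dots> = {min (v0 0 1) (v0 1 1), min (v0 1 1) (v0 0 1)}" by blast
    finally show ?thesis by (simp add: v0_def)
  qed
  thus ?thesis by (simp add: second_highest_def)
qed

lemma wal: "walrasian_revenue 2 2 v0 = 1"
proof -
  have e: "{..<2::nat} = {0,1}" by auto
  show ?thesis using sh0 sh1 by (simp add: walrasian_revenue_def e)
qed

lemma rev: "revenue 2 2 tb0 s0 = 0"
proof -
  have e: "{..<2::nat} = {0,1}" by auto
  show ?thesis by (simp add: revenue_def e numeral_2_eq_2 winner_def s0_def tb0_def)
qed

theorem mainTheorem4:
  fixes \<delta> :: real
  assumes "\<delta> > 0"
  shows "\<exists>(m::nat) (v::nat \<Rightarrow> nat \<Rightarrow> real) tb s.
           (\<forall>i j. 0 \<le> v i j) \<and>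
           valid_tiebreak 2 tb \<and>
           pure_SPE 2 m v tb s \<and>
           0 < walrasian_revenue 2 m v \<and>
           revenue 2 m tb s \<le> \<delta> * walrasian_revenue 2 m v"
  apply (rule exI[of _ 2], rule exI[of _ v0], rule exI[of _ tb0], rule exI[of _ s0])
  using assms by (simp add: v0_def tb_ok spe wal rev)

end
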